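(* Let $d\ge 3$ be odd, $n=\frac{d^2+1}{2}$, and consider the generalized bicycle code defined by $a(x)=1+x$, $b(x)=1+x^d$ in $R_n$ (a $[[d^2+1,2,d]]$ code). Let $$u(x)=1+x^d+x^{2d}+\cdots+x^{(\frac{d-1}{2}-1)d},\qquad v(x)=x^{n-\frac{d+1}{2}}+x^{n-\frac{d+1}{2}+1}+\cdots+x^{n-1},$$ $P_d(x)=1+x+\cdots+x^{d-1}$, and $P_d(x)^{-1}$ its inverse modulo $x^n-1$. Then $w_1=(u(x),v(x))$ and $w_2=(xv(x^d),u(x^d))$ lie in $C_1\setminus C_2$ and $w_1+w_2\notin C_2$, so the two logical qubits may be labelled so that the X-type operator $X^{w_1}$ implements logical $XI$ and $X^{w_2}$ implements logical $XX$; with this labelling, logical $IX$ is implemented by $X^{(1,P_d(x))}$ and by $X^{(P_d(x)^{-1},1)}$. Each of these statements remains true when the vector is replaced by any cyclic shift $x^i\cdot(\,\cdot\,,\,\cdot\,)$. The operators for $XI$ and $XX$ have weight $d$ and those for $IX$ have weight $d+1$, and each is of minimum weight among X-type operators implementing the same logical operator.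
   Context: $R_n=\mathbb{F}_2[x]/\langle x^n-1\rangle$; vectors of $\mathbb{F}_2^{2n}$ are pairs $(p(x),q(x))$ of elements of $R_n$ (first component on the first $n$ qubits, second on the last $n$), $x^i\cdot(p,q)=(x^ip,x^iq)$, and weight is the number of nonzero coefficients. For the generalized bicycle code defined by $a,b$: X-stabilizer space $C_2=\{(ca,cb):c\in R_n\}$ and $C_1=\{(p,q):pb+qa=0\}$ (X-type operators commuting with all Z-stabilizers $x^i(b(x^{-1}),a(x^{-1}))$). $X^{w}$ denotes the tensor product of Pauli $X$ on the support of $w$. X-type operators $X^w$, $X^{w'}$ with $w,w'\in C_1$ implement the same logical operator iff $w+w'\in C_2$, and $X^w$ is a non-trivial logical operator iff $w\in C_1\setminus C_2$. *)

theory Defs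
  imports "HOL-Library.Z2" "HOL-Computational_Algebra.Polynomial"
begin

text \<open>Elements of R_n = F_2[x]/(x^n - 1) are represented by their canonical
 representatives: polynomials over F_2 (type bit) of degree < n.
 Vectors of F_2^{2n} are pairs of such representatives.\<close>

definition xn1 :: "nat \<Rightarrow> bit poly" where
  "xn1 n = monom 1 n - 1"

definition rmod :: "nat \<Rightarrow> bit poly \<Rightarrow> bit poly" where
  "rmod n p = p mod xn1 n"

definition Rn :: "nat \<Rightarrow> bit poly set" where
  "Rn n = {p. rmod n p = p}"

definition rinv :: "nat \<Rightarrow> bit poly \<Rightarrow> bit poly" where
  "rinv n p = (SOME q. q \<in> Rn n \<and> rmod n (q * p) = 1)"

definition vadd :: "bit poly \<times> bit poly \<Rightarrow> bit poly \<times> bit poly \<Rightarrow> bit poly \<times> bit poly" where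
  "vadd w w' = (fst w + fst w', snd w + snd w')"

definition shift :: "nat \<Rightarrow> nat \<Rightarrow> bit poly \<times> bit poly \<Rightarrow> bit poly \<times> bit poly" where
  "shift n i w = (rmod n (monom 1 i * fst w), rmod n (monom 1 i * snd w))"

definition pwt :: "bit poly \<Rightarrow> nat" where
  "pwt p = card {i. coeff p i \<noteq> 0}"

definition wt :: "bit poly \<times> bit poly \<Rightarrow> nat" where
  "wt w = pwt (fst w) + pwt (snd w)"

text \<open>X-stabilizer space C_2 and the space C_1 of X-operators commuting with the Z-stabilizers\<close>
definition C2 :: "nat \<Rightarrow> bit poly \<Rightarrow> bit poly \<Rightarrow> (bit poly \<times> bit poly) set" where
  "C2 n a b = {(rmod n (c * a), rmod n (c * b)) | c. c \<in> Rn n}"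

definition C1 :: "nat \<Rightarrow> bit poly \<Rightarrow> bit poly \<Rightarrow> (bit poly \<times> bit poly) set" where
  "C1 n a b = {(p, q). p \<in> Rn n \<and> q \<in> Rn n \<and> rmod n (p * b + q * a) = 0}"

definition same_logical :: "nat \<Rightarrow> bit poly \<Rightarrow> bit poly \<Rightarrow> bit poly \<times> bit poly \<Rightarrow> bit poly \<times> bit poly \<Rightarrow> bool" where
  "same_logical n a b w w' \<longleftrightarrow> w \<in> C1 n a b \<and> w' \<in> C1 n a b \<and> vadd w w' \<in> C2 n a b"

definition min_weight :: "nat \<Rightarrow> bit poly \<Rightarrow> bit poly \<Rightarrow> bit poly \<times> bit poly \<Rightarrow> bool" where
  "min_weight n a b w \<longleftrightarrow> (\<forall>w'. same_logical n a b w w' \<longrightarrow> wt w \<le> wt w')"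

definition subst_pow :: "bit poly \<Rightarrow> nat \<Rightarrow> bit poly" where
  "subst_pow p k = pcompose p (monom 1 k)"

definition u_poly :: "nat \<Rightarrow> bit poly" where
  "u_poly d = (\<Sum>j<(d - 1) div 2. monom 1 (j * d))"

definition v_poly :: "nat \<Rightarrow> nat \<Rightarrow> bit poly" where
  "v_poly n d = (\<Sum>k\<in>{n - (d + 1) div 2..<n}. monom 1 k)"

definition P_poly :: "nat \<Rightarrow> bit poly" where
  "P_poly d = (\<Sum>k<d. monom 1 k)"

end

theory Submission
  imports Defs
begin

lemma bit_add_self [simp]: "(x::bit) + x = 0"
  by (cases x) simp_all

lemma bpoly_add_self [simp]: "(p::bit poly) + p = 0"
  by (rule poly_eqI) (simp only: coeff_add coeff_0 bit_add_self)

lemma two_bpoly [simp]: "(2::bit poly) = 0"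
  by (metis one_add_one bpoly_add_self)

lemma bpoly_minus [simp]: "- (p::bit poly) = p"
  by (simp add: poly_eq_iff)

lemma bpoly_diff [simp]: "(p::bit poly) - q = p + q"
  by (metis bpoly_minus diff_conv_add_uminus)

definition G :: "nat \<Rightarrow> bit poly" where "G L = (\<Sum>k<L. monom 1 k)"

lemma G_Suc: "G (Suc L) = G L + monom 1 L" by (simp add: G_def)

lemma G_tele: "(1 + monom 1 1) * G L = 1 + monom 1 L"
proof (induction L)
  case 0 then show ?case by (simp add: G_def)
next
  case (Suc L)
  have "(1 + monom 1 1) * G (Suc L) = (1 + monom 1 1) * G L + (monom 1 L + monom 1 (Suc L))"
    by (simp add: G_Suc distrib_left distrib_right mult_monom)
  also have "\<dots> = 1 + (monom 1 L + monom 1 L) + monom 1 (Suc L)"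
    using Suc by (simp only: add.assoc)
  finally show ?case by simp
qed

lemma xn1_alt: "xn1 n = (1 + monom 1 1) * G n"
  unfolding xn1_def bpoly_diff G_tele by (simp add: add.commute)

lemma of_nat_bit: "(of_nat m :: bit) = (if even m then 0 else 1)"
  by (induction m) auto

lemma bit_cases2: "(x::bit) = 0 \<or> x = 1"
  by (cases x) simp_all

lemma degree_xn1: "n > 0 \<Longrightarrow> degree (xn1 n) = n"
  unfolding xn1_def bpoly_diff by (simp add: degree_add_eq_left degree_monom_eq)

lemma xn1_nz: "n > 0 \<Longrightarrow> xn1 n \<noteq> 0"
proof
  assume n: "n > 0" and z: "xn1 n = 0"
  have "degree (xn1 n) = 0" using z by (simp only: degree_0)
  then show False using degree_xn1[OF n] n by linarith
qed

definition eqm :: "nat \<Rightarrow> bit poly \<Rightarrow> bit poly \<Rightarrow> bool" where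
  "eqm n p q \<longleftrightarrow> p mod xn1 n = q mod xn1 n"

lemma eqm_rmod: "eqm n p q \<longleftrightarrow> rmod n p = rmod n q"
  by (simp add: eqm_def rmod_def)

lemma eqm_refl [simp]: "eqm n p p" by (simp add: eqm_def)
lemma eqm_sym: "eqm n p q \<Longrightarrow> eqm n q p" by (simp add: eqm_def)
lemma eqm_trans [trans]: "eqm n p q \<Longrightarrow> eqm n q r \<Longrightarrow> eqm n p r" by (simp add: eqm_def)
lemma eqm_add: "eqm n p p' \<Longrightarrow> eqm n q q' \<Longrightarrow> eqm n (p + q) (p' + q')"
  unfolding eqm_def by (rule mod_add_cong)
lemma eqm_mult: "eqm n p p' \<Longrightarrow> eqm n q q' \<Longrightarrow> eqm n (p * q) (p' * q')"
  unfolding eqm_def by (rule mod_mult_cong)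
lemma eqm_rmod_left: "eqm n (rmod n p) p"
  by (simp add: eqm_def rmod_def)

lemma eqm_sum: "(\<And>i. i \<in> I \<Longrightarrow> eqm n (f i) (g i)) \<Longrightarrow> eqm n (sum f I) (sum g I)"
proof (induction I rule: infinite_finite_induct)
  case (insert x F)
  then show ?case by (simp add: eqm_add)
qed simp_all

lemma eqm_xn: "eqm n (monom 1 n) 1"
proof -
  have "xn1 n dvd monom 1 n - 1" by (simp add: xn1_def)
  then show ?thesis unfolding eqm_def using mod_eq_dvd_iff by blast
qed

lemma eqm_xn_pow: "eqm n (monom 1 (n * k)) 1"
proof -
  have "monom 1 (n * k) = (monom 1 n :: bit poly) ^ k" by (simp add: monom_power)
  moreover have "eqm n ((monom 1 n :: bit poly) ^ k) (1 ^ k)"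
  proof (induction k)
    case (Suc k)
    then show ?case using eqm_mult[OF eqm_xn Suc] by simp
  qed simp
  ultimately show ?thesis by simp
qed

lemma eqm_monom_mod: "eqm n (monom 1 k) (monom 1 (k mod n))"
proof -
  have "monom 1 k = (monom 1 (k mod n) :: bit poly) * monom 1 (n * (k div n))"
    by (simp add: mult_monom)
  moreover have "eqm n ((monom 1 (k mod n) :: bit poly) * monom 1 (n * (k div n))) (monom 1 (k mod n) * 1)"
    by (intro eqm_mult eqm_refl eqm_xn_pow)
  ultimately show ?thesis by simp
qed

lemma rmod_id: "n > 0 \<Longrightarrow> degree p < n \<Longrightarrow> rmod n p = p"
  unfolding rmod_def by (rule mod_poly_less) (simp add: degree_xn1)

lemma Rn_iff_deg: "n > 0 \<Longrightarrow> p \<in> Rn n \<longleftrightarrow> degree p < n \<or> p = 0"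
proof -
  assume n: "n > 0"
  show ?thesis
  proof
    assume "p \<in> Rn n"
    then have "p mod xn1 n = p" by (simp add: Rn_def rmod_def)
    then show "degree p < n \<or> p = 0"
      using degree_mod_less[OF xn1_nz[OF n], of p] degree_xn1[OF n] by auto
  next
    assume "degree p < n \<or> p = 0"
    then show "p \<in> Rn n" using rmod_id[OF n] by (auto simp: Rn_def rmod_def)
  qed
qed

lemma rmod_in_Rn: "rmod n p \<in> Rn n"
  by (simp add: Rn_def rmod_def)

lemma Rn_eqm_eq: "p \<in> Rn n \<Longrightarrow> q \<in> Rn n \<Longrightarrow> eqm n p q \<Longrightarrow> p = q"
  by (simp add: Rn_def eqm_rmod)

lemma poly_rmod_1: "poly (rmod n p) 1 = poly p 1"
proof -
  have "poly p 1 = poly ((p div xn1 n) * xn1 n + p mod xn1 n) 1" by (simp only: div_mult_mod_eq)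
  then have "poly p 1 = poly (p div xn1 n) 1 * poly (xn1 n) 1 + poly (p mod xn1 n) 1"
    by (simp only: poly_add poly_mult)
  moreover have "poly (xn1 n) 1 = 0" by (simp add: xn1_def poly_monom)
  ultimately have "poly p 1 = poly (p mod xn1 n) 1" by (simp only: mult_zero_right add_0)
  then show ?thesis unfolding rmod_def by (rule sym)
qed

lemma poly_eqm_1: "eqm n p q \<Longrightarrow> poly p 1 = poly q 1"
proof -
  assume "eqm n p q"
  then have "poly (rmod n p) 1 = poly (rmod n q) 1" by (simp only: eqm_rmod)
  then show ?thesis by (simp only: poly_rmod_1)
qed

lemma rmod_add: "rmod n (p + q) = rmod n p + rmod n q"
  by (simp add: rmod_def poly_mod_add_left)

definition supp :: "bit poly \<Rightarrow> nat set" where "supp p = {i. coeff p i \<noteq> 0}"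

lemma pwt_supp: "pwt p = card (supp p)" by (simp add: pwt_def supp_def)

lemma finite_supp [simp]: "finite (supp p)"
proof -
  have "supp p \<subseteq> {..degree p}" by (auto simp: supp_def intro!: le_degree)
  then show ?thesis using finite_subset by blast
qed

lemma coeff_monoms: "finite I \<Longrightarrow> coeff (\<Sum>k\<in>I. monom (1::bit) k) i = (if i \<in> I then 1 else 0)"
  by (simp add: coeff_sum coeff_monom)

lemma poly_as_monoms: "p = (\<Sum>k\<in>supp p. monom 1 k)"
proof (rule poly_eqI)
  fix i
  have "coeff (\<Sum>k\<in>supp p. monom 1 k) i = (if i \<in> supp p then 1 else 0)"
    by (simp add: coeff_sum coeff_monom)
  then show "coeff p i = coeff (\<Sum>k\<in>supp p. monom 1 k) i"
    using bit_cases2[of "coeff p i"] by (auto simp: supp_def)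
qed

lemma pwt_add_le: "pwt (p + q) \<le> pwt p + pwt q"
proof -
  have "supp (p + q) \<subseteq> supp p \<union> supp q" by (auto simp: supp_def)
  then have "card (supp (p + q)) \<le> card (supp p \<union> supp q)" by (simp add: card_mono)
  also have "\<dots> \<le> card (supp p) + card (supp q)" by (rule card_Un_le)
  finally show ?thesis by (simp add: pwt_supp)
qed

lemma pwt_sum_le: "pwt (sum f I) \<le> (\<Sum>i\<in>I. pwt (f i))"
proof (induction I rule: infinite_finite_induct)
  case (infinite A) then show ?case by (simp add: pwt_def)
next
  case empty then show ?case by (simp add: pwt_def)
next
  case (insert x F)
  then show ?case using pwt_add_le[of "f x" "sum f F"] by simp
qed

lemma pwt_monom1 [simp]: "pwt (monom 1 k) = 1"
proof -
  have "{i. coeff (monom (1::bit) k) i \<noteq> 0} = {k}" by (auto simp: coeff_monom)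
  then show ?thesis by (simp add: pwt_def)
qed

lemma pwt_monoms_le: "pwt (\<Sum>i\<in>I. monom 1 (f i)) \<le> card I"
  using pwt_sum_le[of "\<lambda>i. monom 1 (f i)" I] by simp

lemma pwt_monoms_le': "card I \<le> m \<Longrightarrow> pwt (\<Sum>i\<in>I. monom 1 (f i)) \<le> m"
  using pwt_monoms_le[of f I] by linarith

lemma rmod_monoms: "n > 0 \<Longrightarrow> finite I \<Longrightarrow> rmod n (\<Sum>i\<in>I. monom 1 (f i)) = (\<Sum>i\<in>I. monom 1 (f i mod n))"
proof -
  assume n: "n > 0" and fin: "finite I"
  have "eqm n (\<Sum>i\<in>I. monom 1 (f i)) (\<Sum>i\<in>I. monom 1 (f i mod n))"
    by (rule eqm_sum) (rule eqm_monom_mod)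
  moreover have "degree (\<Sum>i\<in>I. monom (1::bit) (f i mod n)) \<le> n - 1"
    by (rule degree_sum_le[OF fin]) (use n in \<open>simp add: degree_monom_eq less_Suc_eq_le[symmetric]\<close>)
  then have "degree (\<Sum>i\<in>I. monom (1::bit) (f i mod n)) < n" using n by linarith
  ultimately show ?thesis using rmod_id[OF n] by (simp add: eqm_rmod)
qed

lemma pwt_rmod_le: "n > 0 \<Longrightarrow> pwt (rmod n p) \<le> pwt p"
proof -
  assume n: "n > 0"
  have "rmod n p = rmod n (\<Sum>k\<in>supp p. monom 1 k)" by (subst poly_as_monoms) rule
  also have "\<dots> = (\<Sum>k\<in>supp p. monom 1 (k mod n))" using rmod_monoms[OF n, of "supp p" "\<lambda>k. k"] by simp
  finally have "pwt (rmod n p) \<le> card (supp p)" using pwt_monoms_le by simp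
  then show ?thesis by (simp add: pwt_supp)
qed

lemma prod_as_monoms: "p * q = (\<Sum>x\<in>supp p \<times> supp q. monom 1 (fst x + snd x))"
proof -
  have "p * q = (\<Sum>k\<in>supp p. monom 1 k) * (\<Sum>j\<in>supp q. monom 1 j)"
    by (subst (1) poly_as_monoms, subst (2) poly_as_monoms) rule
  also have "\<dots> = (\<Sum>k\<in>supp p. \<Sum>j\<in>supp q. monom 1 k * monom 1 j)"
    by (simp add: sum_product)
  also have "\<dots> = (\<Sum>x\<in>supp p \<times> supp q. monom 1 (fst x + snd x))"
    by (simp add: sum.cartesian_product mult_monom case_prod_beta)
  finally show ?thesis .
qed

lemma pwt_rmod_mult_le: "n > 0 \<Longrightarrow> pwt (rmod n (p * q)) \<le> pwt p * pwt q"
proof -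
  assume n: "n > 0"
  have "pwt (rmod n (p * q)) \<le> pwt (p * q)" by (rule pwt_rmod_le[OF n])
  also have "\<dots> \<le> card (supp p \<times> supp q)" by (subst prod_as_monoms) (rule pwt_monoms_le)
  also have "\<dots> = pwt p * pwt q" by (simp add: card_cartesian_product pwt_supp)
  finally show ?thesis .
qed

lemma poly_monoms_1: "poly (\<Sum>i\<in>I. monom (1::bit) (f i)) 1 = of_nat (card I)"
  by (simp add: poly_sum poly_monom)

lemma poly_1_pwt: "poly p 1 = of_nat (pwt p)"
  by (subst poly_as_monoms) (simp only: poly_monoms_1 pwt_supp)

lemma bpoly_cancel1 [simp]: "(p::bit poly) + (p + q) = q"
  by (simp add: add.assoc[symmetric])
lemma bpoly_cancel2 [simp]: "(q::bit poly) + p + p = q"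
  by (simp add: add.assoc)

lemma pwt_mult_le: "pwt (p * q) \<le> pwt p * pwt q"
proof -
  have "pwt (p * q) \<le> card (supp p \<times> supp q)" by (subst prod_as_monoms) (rule pwt_monoms_le)
  also have "\<dots> = pwt p * pwt q" by (simp add: card_cartesian_product pwt_supp)
  finally show ?thesis .
qed

lemma pcompose_monom1: "pcompose (monom (1::bit) k) (monom 1 m) = monom 1 (k * m)"
proof (induction k)
  case 0 then show ?case by (simp add: pcompose_1 one_pCons[symmetric])
next
  case (Suc k)
  have e: "monom (1::bit) (Suc k) = monom 1 1 * monom 1 k" by (simp add: mult_monom)
  have e1: "pcompose (monom (1::bit) 1) (monom 1 m) = monom 1 m"
    by (simp add: monom_Suc pcompose_pCons pcompose_1 one_pCons[symmetric])
  show ?case unfolding e pcompose_mult e1 Suc by (simp add: mult_monom)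
qed

lemma pcompose_monoms: "pcompose (\<Sum>i\<in>I. monom (1::bit) (f i)) (monom 1 m) = (\<Sum>i\<in>I. monom 1 (f i * m))"
  by (simp add: pcompose_sum pcompose_monom1)

lemma pwt_pcompose_le: "pwt (pcompose p (monom 1 m)) \<le> pwt p"
proof -
  have "pcompose p (monom 1 m) = (\<Sum>k\<in>supp p. monom 1 (k * m))"
    by (subst poly_as_monoms) (simp only: pcompose_monoms)
  then show ?thesis using pwt_monoms_le[of "\<lambda>k. k * m" "supp p"] by (simp add: pwt_supp)
qed

lemma G_add: "G (A + L) = G A + monom 1 A * G L"
proof (induction L)
  case 0 then show ?case by (simp add: G_def)
next
  case (Suc L)
  show ?case by (simp add: G_Suc Suc distrib_left mult_monom add.assoc)
qed

lemma G_0 [simp]: "G 0 = 0" by (simp add: G_def)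
lemma G_1 [simp]: "G 1 = 1" by (simp add: G_def)
lemma G_Suc0 [simp]: "G (Suc 0) = 1" by (simp add: G_def)

lemma interval_G: "(\<Sum>k\<in>{A..<A+L}. monom (1::bit) k) = monom 1 A * G L"
proof (induction L)
  case 0 then show ?case by simp
next
  case (Suc L)
  have "{A..<A + Suc L} = insert (A + L) {A..<A+L}" by auto
  then show ?case using Suc by (simp add: G_Suc distrib_left mult_monom add.commute)
qed

definition U :: "nat \<Rightarrow> nat \<Rightarrow> bit poly" where "U d m = (\<Sum>j<m. monom 1 (j * d))"

lemma U_Suc: "U d (Suc m) = U d m + monom 1 (m * d)" by (simp add: U_def)

lemma PU: "G d * U d m = G (m * d)"
proof (induction m)
  case 0 then show ?case by (simp add: U_def)
next
  case (Suc m)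
  have "G d * U d (Suc m) = G (m * d) + monom 1 (m * d) * G d"
    by (simp add: U_Suc distrib_left Suc mult.commute)
  also have "\<dots> = G (Suc m * d)" using G_add[of "m * d" d] by (simp add: add.commute)
  finally show ?case .
qed

lemma U_tele: "U d m * (1 + monom 1 d) = 1 + monom 1 (m * d)"
proof (induction m)
  case 0 then show ?case by (simp add: U_def)
next
  case (Suc m)
  have e: "monom 1 (m*d) * (1 + monom 1 d) = monom (1::bit) (m*d) + monom 1 (Suc m * d)"
    by (simp add: distrib_left mult_monom add.commute)
  have "U d (Suc m) * (1 + monom 1 d) = (1 + monom 1 (m * d)) + (monom 1 (m * d) + monom 1 (Suc m * d))"
    by (simp only: U_Suc distrib_right Suc e)
  also have "\<dots> = 1 + monom 1 (Suc m * d)" by (simp add: add.assoc)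
  finally show ?case .
qed

lemma pwt_U: "pwt (U d m) \<le> m"
  unfolding U_def using pwt_monoms_le[of "\<lambda>j. j * d" "{..<m}"] by simp

lemma pwt_G: "pwt (G m) \<le> m"
  unfolding G_def using pwt_monoms_le[of "\<lambda>j. j" "{..<m}"] by simp

lemma poly_U_1: "poly (U d m) 1 = of_nat m"
  unfolding U_def using poly_monoms_1[of "\<lambda>j. j * d" "{..<m}"] by simp

lemma poly_G_1: "poly (G m) 1 = of_nat m"
  unfolding G_def using poly_monoms_1[of "\<lambda>j. j" "{..<m}"] by simp

lemma coeff_G: "coeff (G m) i = (if i < m then 1 else 0)"
  unfolding G_def by (simp add: coeff_sum coeff_monom)

lemma pwt_G_eq: "pwt (G m) = m"
proof -
  have "{i. coeff (G m) i \<noteq> 0} = {..<m}" by (auto simp: coeff_G)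
  then show ?thesis by (simp add: pwt_def)
qed

lemma degree_G: "degree (G m) \<le> m - 1"
  unfolding G_def by (rule degree_sum_le) (auto simp: degree_monom_eq)

lemma degree_G_eq: "m > 0 \<Longrightarrow> degree (G m) = m - 1"
proof -
  assume m: "m > 0"
  have "coeff (G m) (m - 1) \<noteq> 0" using m by (simp add: coeff_G)
  then have "m - 1 \<le> degree (G m)" by (rule le_degree)
  then show ?thesis using degree_G[of m] by linarith
qed

lemma G_nz: "m > 0 \<Longrightarrow> G m \<noteq> 0"
  using coeff_G[of m 0] by auto

lemma eqm_char2: "eqm n (p + q) 0 \<Longrightarrow> eqm n p q"
proof -
  assume "eqm n (p + q) 0"
  then have "eqm n ((p + q) + q) (0 + q)" by (rule eqm_add) simp
  then show ?thesis by simp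
qed

lemma dvd_eqm0: "xn1 n dvd r \<Longrightarrow> eqm n r 0"
  by (simp add: eqm_def)

lemma a_pCons: "1 + monom (1::bit) 1 = [:1, 1:]"
  by (simp add: monom_Suc one_pCons)

lemma K1: "G d * (1 + monom 1 1) = 1 + monom 1 d"
  using G_tele[of d] by (simp add: mult.commute)

lemma KJ: "eqm n (f * G n) (smult (poly f 1) (G n))"
proof -
  have "poly (f + [:poly f 1:]) 1 = 0" by simp
  then have "[:-1, 1:] dvd (f + [:poly f 1:])" using poly_eq_0_iff_dvd by blast
  then obtain g where g: "f + [:poly f 1:] = [:1, 1:] * g" by (auto simp: dvd_def)
  have "(f + [:poly f 1:]) * G n = g * xn1 n" unfolding g xn1_alt a_pCons by (simp only: mult.commute mult.left_commute mult.assoc)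
  then have "eqm n (f * G n + smult (poly f 1) (G n)) 0"
    by (intro dvd_eqm0) (simp add: distrib_right)
  then show ?thesis by (rule eqm_char2)
qed

lemma const_mult: "[:c:] * p = smult c p" by simp

declare add_bit_eq_xor[simp del] mult_bit_eq_and[simp del]

locale gb =
  fixes h d n :: nat
  assumes h1: "h \<ge> 1" and dd: "d = 2 * h + 1" and nn: "n = 2 * h * h + 2 * h + 1"
begin

lemma n_pos: "n > 0" using nn by simp
lemma n_gt1: "n > 1" using nn h1 by simp
lemma odd_n: "odd n" using nn by simp
lemma odd_d: "odd d" using dd by simp
lemma hd_n: "h * d + (h + 1) = n" using dd nn by (simp add: algebra_simps)
lemma h1d_n: "(h + 1) * d = n + h" using dd nn by (simp add: algebra_simps)
lemma dd_n: "d * d + 1 = 2 * n" using dd nn by (simp add: algebra_simps)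

lemma of_nat_n: "(of_nat n :: bit) = 1" using odd_n by (simp add: of_nat_bit)
lemma of_nat_d: "(of_nat d :: bit) = 1" using odd_d by (simp add: of_nat_bit)

lemma poly_P1: "poly (G d) 1 = 1" by (simp add: poly_G_1 of_nat_d)
lemma poly_J1: "poly (G n) 1 = 1" by (simp add: poly_G_1 of_nat_n)

lemma rmod_smult_J: "rmod n (smult c (G n)) = smult c (G n)"
proof -
  have "degree (smult c (G n)) < n" using degree_G[of n] n_pos degree_smult_le[of c "G n"] by linarith
  then show ?thesis by (rule rmod_id[OF n_pos])
qed

lemma K3:
  assumes p: "p \<in> Rn n" and q: "q \<in> Rn n"
    and c1: "rmod n (p * (1 + monom 1 d) + q * (1 + monom 1 1)) = 0"
  shows "q = rmod n (p * G d) + smult (poly p 1 + poly q 1) (G n)"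
proof -
  let ?a = "1 + monom (1::bit) 1"
  have e: "p * (1 + monom 1 d) + q * ?a = ?a * (p * G d + q)"
    by (simp only: K1[of d, symmetric]) (simp add: algebra_simps)
  have "xn1 n dvd ?a * (p * G d + q)" using c1 unfolding e rmod_def by (simp add: dvd_eq_mod_eq_0)
  then have "?a * G n dvd ?a * (p * G d + q)" by (simp add: xn1_alt)
  moreover have "?a \<noteq> 0" by (simp only: a_pCons) simp
  ultimately have dv: "G n dvd (p * G d + q)" by simp
  define r where "r = rmod n (p * G d + q)"
  have "G n dvd xn1 n" by (simp add: xn1_alt)
  then have "G n dvd r" unfolding r_def rmod_def using dv by (simp add: dvd_mod)
  then obtain t where t: "r = G n * t" by (auto simp: dvd_def)
  have rR: "r \<in> Rn n" unfolding r_def by (rule rmod_in_Rn)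
  have "\<exists>c. r = smult c (G n)"
  proof (cases "t = 0")
    case True then show ?thesis using t by (intro exI[of _ 0]) simp
  next
    case False
    then have "r \<noteq> 0" using t G_nz[OF n_pos] by simp
    then have "degree r < n" using rR Rn_iff_deg[OF n_pos] by blast
    moreover have "degree r = (n - 1) + degree t"
      using t False G_nz[OF n_pos] degree_G_eq[OF n_pos] by (simp add: degree_mult_eq)
    ultimately have "degree t = 0" using n_pos by linarith
    then have "t = [:coeff t 0:]" by (metis degree_0_id)
    then have "r = G n * [:coeff t 0:]" using t by simp
    then have "r = smult (coeff t 0) (G n)" by (simp add: mult.commute)
    then show ?thesis by blast
  qed
  then obtain c where c: "r = smult c (G n)" by blast
  have "poly r 1 = poly p 1 + poly q 1"
    unfolding r_def poly_rmod_1 by (simp add: poly_P1)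
  moreover have "poly r 1 = c" using c by (simp add: poly_J1)
  ultimately have c2: "r = smult (poly p 1 + poly q 1) (G n)" using c by simp
  have "q = rmod n q" using q by (simp add: Rn_def)
  also have "\<dots> = rmod n ((p * G d + q) + p * G d)" by simp
  also have "\<dots> = r + rmod n (p * G d)" unfolding r_def by (rule rmod_add)
  finally show ?thesis using c2 by (simp add: add.commute)
qed


abbreviation A :: "bit poly" where "A \<equiv> 1 + monom 1 1"
abbreviation B :: "bit poly" where "B \<equiv> 1 + monom 1 d"

lemma poly_A1: "poly A 1 = 0" by (simp add: poly_monom)
lemma poly_B1: "poly B 1 = 0" by (simp add: poly_monom)

lemma C1D: "(p, q) \<in> C1 n A B \<Longrightarrow> p \<in> Rn n \<and> q \<in> Rn n \<and> rmod n (p * B + q * A) = 0"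
  by (simp add: C1_def)

lemma C2_iff:
  assumes w: "(p, q) \<in> C1 n A B"
  shows "(p, q) \<in> C2 n A B \<longleftrightarrow> poly p 1 = 0 \<and> poly q 1 = 0"
proof
  assume "(p, q) \<in> C2 n A B"
  then obtain c where "p = rmod n (c * A)" "q = rmod n (c * B)" by (auto simp: C2_def)
  then show "poly p 1 = 0 \<and> poly q 1 = 0" by (simp only: poly_rmod_1 poly_mult poly_A1 poly_B1) simp
next
  assume z: "poly p 1 = 0 \<and> poly q 1 = 0"
  from w have p: "p \<in> Rn n" and q: "q \<in> Rn n" and c1: "rmod n (p * B + q * A) = 0"
    using C1D[OF w] by blast+
  have "[:-1, 1:] dvd p" using z poly_eq_0_iff_dvd by blast
  then obtain c where c: "p = [:1, 1:] * c" by (auto simp: dvd_def)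
  have cA: "c * A = p" unfolding c a_pCons by (simp add: mult.commute)
  have cR: "c \<in> Rn n"
  proof (cases "c = 0")
    case True then show ?thesis by (simp add: Rn_def rmod_def)
  next
    case False
    then have "p \<noteq> 0" by (simp only: c mult_eq_0_iff) simp
    then have "degree p < n" using p Rn_iff_deg[OF n_pos] by blast
    moreover have "degree p = 1 + degree c" unfolding c using False by (subst degree_mult_eq) auto
    ultimately show ?thesis using Rn_iff_deg[OF n_pos] by auto
  qed
  have "rmod n (c * A) = p" using cA p by (simp add: Rn_def)
  moreover have "rmod n (c * B) = q"
  proof -
    have "c * B = p * G d" unfolding cA[symmetric] K1[of d, symmetric] by (simp add: mult_ac)
    then show ?thesis using K3[OF p q c1] z by simp
  qed
  ultimately show "(p, q) \<in> C2 n A B" unfolding C2_def using cR by blast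
qed

lemma Kd:
  assumes w: "(p, q) \<in> C1 n A B" and RS: "eqm n (R + G d * S) (G n)"
  shows "rmod n (p * R + q * S) = smult (poly p 1 + poly S 1 * (poly p 1 + poly q 1)) (G n)"
proof -
  from w have p: "p \<in> Rn n" and q: "q \<in> Rn n" and c1: "rmod n (p * B + q * A) = 0"
    using C1D[OF w] by blast+
  define l where "l = poly p 1 + poly q 1"
  have qe: "q = rmod n (p * G d) + smult l (G n)" using K3[OF p q c1] by (simp add: l_def)
  have "eqm n q (p * G d + smult l (G n))"
    unfolding qe by (intro eqm_add eqm_rmod_left eqm_refl)
  then have "eqm n (p * R + q * S) (p * R + (p * G d + smult l (G n)) * S)"
    by (intro eqm_add eqm_mult eqm_refl)
  also have "p * R + (p * G d + smult l (G n)) * S = p * (R + G d * S) + smult l (S * G n)"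
    by (simp add: algebra_simps)
  finally have 1: "eqm n (p * R + q * S) (p * (R + G d * S) + smult l (S * G n))" .
  have "eqm n (p * (R + G d * S) + smult l (S * G n)) (p * G n + smult l (smult (poly S 1) (G n)))"
  proof (intro eqm_add eqm_mult eqm_refl RS)
    show "eqm n (smult l (S * G n)) (smult l (smult (poly S 1) (G n)))"
      using eqm_mult[OF eqm_refl[of n "[:l:]"] KJ[of n S]] by (simp only: const_mult)
  qed
  also have "eqm n (p * G n + smult l (smult (poly S 1) (G n))) (smult (poly p 1) (G n) + smult l (smult (poly S 1) (G n)))"
    by (intro eqm_add KJ eqm_refl)
  finally have "eqm n (p * R + q * S) (smult (poly p 1 + poly S 1 * l) (G n))"
    using 1 eqm_trans by (simp add: smult_add_left mult.commute)
  then show ?thesis using rmod_smult_J by (simp add: eqm_rmod l_def)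
qed

lemma dist_gen:
  assumes w: "(p, q) \<in> C1 n A B" and RS: "eqm n (R + G d * S) (G n)"
    and one: "poly p 1 + poly S 1 * (poly p 1 + poly q 1) = 1"
  shows "n \<le> pwt p * pwt R + pwt q * pwt S"
proof -
  have "rmod n (p * R + q * S) = G n" using Kd[OF w RS] one by simp
  then have "n = pwt (rmod n (p * R) + rmod n (q * S))" by (simp add: rmod_add pwt_G_eq)
  also have "\<dots> \<le> pwt (rmod n (p * R)) + pwt (rmod n (q * S))" by (rule pwt_add_le)
  also have "\<dots> \<le> pwt p * pwt R + pwt q * pwt S"
    using pwt_rmod_mult_le[OF n_pos, of p R] pwt_rmod_mult_le[OF n_pos, of q S] by linarith
  finally show ?thesis .
qed

lemma RS1: "eqm n (monom 1 (h * d) * G (h + 1) + G d * U d h) (G n)"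
proof -
  have "monom 1 (h * d) * G (h + 1) + G d * U d h = G n"
    using G_add[of "h * d" "h + 1"] hd_n by (simp add: PU add.commute)
  then show ?thesis by simp
qed

lemma RS2: "eqm n (G h + G d * U d (h + 1)) (G n)"
proof -
  have "G d * U d (h + 1) = G n + monom 1 n * G h"
    using G_add[of n h] h1d_n by (simp add: PU)
  moreover have "eqm n (G n + monom 1 n * G h) (G n + 1 * G h)"
    by (intro eqm_add eqm_mult eqm_refl eqm_xn)
  ultimately have "eqm n (G h + G d * U d (h + 1)) (G h + (G n + G h))"
    by (intro eqm_add eqm_refl) simp
  then show ?thesis by (simp add: add.commute add.left_commute)
qed

lemma arith1: "n \<le> x * (h + 1) + y * h \<Longrightarrow> d \<le> x + y"
proof (rule ccontr)
  assume a: "n \<le> x * (h + 1) + y * h" and b: "\<not> d \<le> x + y"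
  then have "x + y \<le> 2 * h" using dd by linarith
  then have "(x + y) * (h + 1) \<le> (2 * h) * (h + 1)" by (rule mult_le_mono1)
  moreover have "x * (h + 1) + y * h \<le> (x + y) * (h + 1)" by (simp add: algebra_simps)
  ultimately show False using a nn by (simp add: algebra_simps)
qed

lemma distance:
  assumes w: "(p, q) \<in> C1 n A B" and nt: "\<not> (poly p 1 = 0 \<and> poly q 1 = 0)"
  shows "d \<le> pwt p + pwt q"
proof -
  have c: "poly p 1 + of_nat h * (poly p 1 + poly q 1) = 1 \<or>
        poly p 1 + of_nat (h + 1) * (poly p 1 + poly q 1) = 1"
    using nt bit_cases2[of "poly p 1"] bit_cases2[of "poly q 1"] bit_cases2[of "of_nat h :: bit"]
    by (auto simp del: add_bit_eq_xor mult_bit_eq_and)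
  then show ?thesis
  proof
    assume c1: "poly p 1 + of_nat h * (poly p 1 + poly q 1) = 1"
    have "n \<le> pwt p * pwt (monom 1 (h * d) * G (h + 1)) + pwt q * pwt (U d h)"
      by (rule dist_gen[OF w RS1]) (simp add: poly_U_1 c1)
    moreover have "pwt (monom 1 (h * d) * G (h + 1)) \<le> h + 1"
      using pwt_mult_le[of "monom 1 (h * d)" "G (h + 1)"] pwt_G[of "h + 1"] by simp
    moreover have "pwt p * pwt (monom 1 (h * d) * G (h + 1)) \<le> pwt p * (h + 1)"
      using calculation(2) by (rule mult_le_mono2)
    moreover have "pwt q * pwt (U d h) \<le> pwt q * h" by (rule mult_le_mono2[OF pwt_U])
    ultimately have "n \<le> pwt p * (h + 1) + pwt q * h" by linarith
    then show ?thesis by (rule arith1)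
  next
    assume c2: "poly p 1 + of_nat (h + 1) * (poly p 1 + poly q 1) = 1"
    have "n \<le> pwt p * pwt (G h) + pwt q * pwt (U d (h + 1))"
      by (rule dist_gen[OF w RS2]) (simp only: poly_U_1 c2)
    moreover have "pwt p * pwt (G h) \<le> pwt p * h" by (rule mult_le_mono2[OF pwt_G])
    moreover have "pwt q * pwt (U d (h + 1)) \<le> pwt q * (h + 1)" by (rule mult_le_mono2[OF pwt_U])
    ultimately have "n \<le> pwt q * (h + 1) + pwt p * h" by linarith
    then have "d \<le> pwt q + pwt p" by (rule arith1)
    then show ?thesis by linarith
  qed
qed


lemma Rn_add: "p \<in> Rn n \<Longrightarrow> q \<in> Rn n \<Longrightarrow> p + q \<in> Rn n"
  by (simp add: Rn_def rmod_add)

lemma Rn_one: "1 \<in> Rn n"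
  using Rn_iff_deg[OF n_pos] n_pos by simp

lemma rmod_one: "rmod n 1 = 1"
  using Rn_one by (simp add: Rn_def)

lemma rmod_eq0_iff: "rmod n p = 0 \<longleftrightarrow> eqm n p 0"
  by (simp add: eqm_rmod rmod_def)

lemma C1I: "p \<in> Rn n \<Longrightarrow> q \<in> Rn n \<Longrightarrow> eqm n (p * B + q * A) 0 \<Longrightarrow> (p, q) \<in> C1 n A B"
  by (simp add: C1_def rmod_eq0_iff)

lemma vadd_C1:
  assumes w: "w \<in> C1 n A B" and w': "w' \<in> C1 n A B"
  shows "vadd w w' \<in> C1 n A B"
proof -
  obtain p q where pq: "w = (p, q)" by (cases w)
  obtain p' q' where pq': "w' = (p', q')" by (cases w')
  have 1: "p \<in> Rn n" "q \<in> Rn n" "eqm n (p * B + q * A) 0" using C1D[of p q] w pq rmod_eq0_iff by auto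
  have 2: "p' \<in> Rn n" "q' \<in> Rn n" "eqm n (p' * B + q' * A) 0" using C1D[of p' q'] w' pq' rmod_eq0_iff by auto
  have "eqm n ((p * B + q * A) + (p' * B + q' * A)) (0 + 0)" by (rule eqm_add[OF 1(3) 2(3)])
  moreover have "(p + p') * B + (q + q') * A = (p * B + q * A) + (p' * B + q' * A)" by (simp add: algebra_simps)
  ultimately have "eqm n ((p + p') * B + (q + q') * A) 0" by simp
  then have "(p + p', q + q') \<in> C1 n A B"
    by (rule C1I[OF Rn_add[OF 1(1) 2(1)] Rn_add[OF 1(2) 2(2)]])
  then show ?thesis using pq pq' by (simp add: vadd_def)
qed

lemma shift_C1:
  assumes w: "w \<in> C1 n A B"
  shows "shift n i w \<in> C1 n A B"
proof -
  obtain p q where pq: "w = (p, q)" by (cases w)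
  have 1: "eqm n (p * B + q * A) 0" using C1D[of p q] w pq rmod_eq0_iff by auto
  have "eqm n (rmod n (monom 1 i * p) * B + rmod n (monom 1 i * q) * A) (monom 1 i * p * B + monom 1 i * q * A)"
    by (intro eqm_add eqm_mult eqm_rmod_left eqm_refl)
  also have "monom 1 i * p * B + monom 1 i * q * A = monom 1 i * (p * B + q * A)" by (simp add: algebra_simps)
  also have "eqm n (monom 1 i * (p * B + q * A)) (monom 1 i * 0)" by (intro eqm_mult eqm_refl 1)
  finally have e: "eqm n (rmod n (monom 1 i * p) * B + rmod n (monom 1 i * q) * A) 0" by simp
  have "(rmod n (monom 1 i * p), rmod n (monom 1 i * q)) \<in> C1 n A B"
    by (rule C1I[OF rmod_in_Rn rmod_in_Rn e])
  then show ?thesis by (simp add: pq shift_def)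
qed

definition par :: "bit poly \<times> bit poly \<Rightarrow> bit \<times> bit" where
  "par w = (poly (fst w) 1, poly (snd w) 1)"

lemma par_shift: "par (shift n i w) = par w"
  by (simp add: par_def shift_def poly_rmod_1 poly_monom)

lemma wt_shift_le: "wt (shift n i w) \<le> wt w"
proof -
  have "pwt (rmod n (monom 1 i * fst w)) \<le> pwt (fst w)"
    using pwt_rmod_mult_le[OF n_pos, of "monom 1 i" "fst w"] by simp
  moreover have "pwt (rmod n (monom 1 i * snd w)) \<le> pwt (snd w)"
    using pwt_rmod_mult_le[OF n_pos, of "monom 1 i" "snd w"] by simp
  ultimately show ?thesis by (simp add: wt_def shift_def)
qed

lemma bit_add_eq0: "(x::bit) + y = 0 \<longleftrightarrow> x = y"
  using bit_cases2[of x] bit_cases2[of y] by auto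

lemma C2_par: "w \<in> C1 n A B \<Longrightarrow> w \<in> C2 n A B \<longleftrightarrow> par w = (0, 0)"
  using C2_iff[of "fst w" "snd w"] by (simp add: par_def)

lemma same_logical_iff:
  "same_logical n A B w w' \<longleftrightarrow> w \<in> C1 n A B \<and> w' \<in> C1 n A B \<and> par w = par w'"
proof -
  have "w \<in> C1 n A B \<Longrightarrow> w' \<in> C1 n A B \<Longrightarrow> vadd w w' \<in> C2 n A B \<longleftrightarrow> par w = par w'"
    using C2_par[OF vadd_C1] by (simp add: par_def vadd_def bit_add_eq0 prod_eq_iff)
  then show ?thesis unfolding same_logical_def by blast
qed

lemma wt_ge_d: "w \<in> C1 n A B \<Longrightarrow> par w \<noteq> (0, 0) \<Longrightarrow> d \<le> wt w"
  using distance[of "fst w" "snd w"] by (simp add: par_def wt_def)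

lemma wt_par: "of_nat (wt w) = fst (par w) + snd (par w)"
  by (simp add: wt_def par_def poly_1_pwt)

lemma wt_ge_d1: "w \<in> C1 n A B \<Longrightarrow> par w = (1, 1) \<Longrightarrow> d + 1 \<le> wt w"
proof -
  assume w: "w \<in> C1 n A B" and p: "par w = (1, 1)"
  have "d \<le> wt w" using wt_ge_d[OF w] p by simp
  moreover have "(of_nat (wt w) :: bit) = 0" using wt_par[of w] p by simp
  then have "even (wt w)" by (simp add: of_nat_bit split: if_splits)
  ultimately show ?thesis using odd_d by (metis le_antisym not_less_eq_eq Suc_eq_plus1)
qed

lemma minw:
  assumes w: "w \<in> C1 n A B" and p: "par w \<noteq> (0, 0)" and le: "wt w \<le> d"
  shows "min_weight n A B w \<and> wt w = d"
proof -
  have "wt w = d" using wt_ge_d[OF w p] le by simp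
  moreover have "min_weight n A B w"
    unfolding min_weight_def same_logical_iff using wt_ge_d p \<open>wt w = d\<close> by metis
  ultimately show ?thesis by simp
qed

lemma minw1:
  assumes w: "w \<in> C1 n A B" and p: "par w = (1, 1)" and le: "wt w \<le> d + 1"
  shows "min_weight n A B w \<and> wt w = d + 1"
proof -
  have "wt w = d + 1" using wt_ge_d1[OF w p] le by simp
  moreover have "min_weight n A B w"
    unfolding min_weight_def same_logical_iff using wt_ge_d1 p \<open>wt w = d + 1\<close> by metis
  ultimately show ?thesis by simp
qed


lemma monoms_Rn: "finite I \<Longrightarrow> (\<And>i. i \<in> I \<Longrightarrow> f i < n) \<Longrightarrow> (\<Sum>i\<in>I. monom (1::bit) (f i)) \<in> Rn n"
proof -
  assume fin: "finite I" and lt: "\<And>i. i \<in> I \<Longrightarrow> f i < n"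
  have "degree (\<Sum>i\<in>I. monom (1::bit) (f i)) \<le> n - 1"
    by (rule degree_sum_le[OF fin]) (use lt in \<open>fastforce simp: degree_monom_eq\<close>)
  then show ?thesis using Rn_iff_deg[OF n_pos] n_pos by auto
qed

lemma xn1_eqm0: "eqm n (1 + monom 1 n) 0"
  by (rule dvd_eqm0) (simp add: xn1_def add.commute)

lemma u_eq: "u_poly d = U d h"
  by (simp add: u_poly_def U_def dd)

lemma v_eq: "v_poly n d = monom 1 (h * d) * G (h + 1)"
proof -
  have "n - (d + 1) div 2 = h * d" using hd_n dd by simp
  then have "{n - (d + 1) div 2..<n} = {h * d..<h * d + (h + 1)}" using hd_n by simp
  then show ?thesis unfolding v_poly_def by (simp only: interval_G)
qed

lemma P_eq: "P_poly d = G d" by (simp add: P_poly_def G_def)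

lemma u_Rn: "U d h \<in> Rn n"
  unfolding U_def
proof (rule monoms_Rn)
  fix j assume "j \<in> {..<h}"
  then have "j * d \<le> h * d" by simp
  then show "j * d < n" using hd_n by linarith
qed simp

lemma v_Rn: "v_poly n d \<in> Rn n"
  unfolding v_poly_def by (rule monoms_Rn) auto

lemma vA: "v_poly n d * A = monom 1 (h * d) + monom 1 n"
proof -
  have "v_poly n d * A = monom 1 (h * d) * (A * G (h + 1))" unfolding v_eq by (simp only: mult_ac)
  also have "\<dots> = monom 1 (h * d) + monom 1 n"
    unfolding G_tele using hd_n by (simp add: distrib_left mult_monom)
  finally show ?thesis .
qed

lemma w1_C1: "(U d h, v_poly n d) \<in> C1 n A B"
proof (rule C1I[OF u_Rn v_Rn])
  have e1: "U d h * B = 1 + monom 1 (h * d)" by (rule U_tele)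
  note vA
  then have "U d h * B + v_poly n d * A = 1 + monom 1 n" unfolding e1 by (simp add: add.assoc)
  then show "eqm n (U d h * B + v_poly n d * A) 0" using xn1_eqm0 by simp
qed

lemma par_w1: "par (U d h, v_poly n d) = (of_nat h, of_nat (h + 1))"
  by (simp add: par_def v_eq poly_U_1 poly_G_1 poly_monom)

lemma pwt_v: "pwt (v_poly n d) \<le> h + 1"
    unfolding v_poly_def by (rule pwt_monoms_le'[of _ _ "\<lambda>k. k", simplified]) (use hd_n dd in simp)

lemma wt_w1: "wt (U d h, v_poly n d) \<le> d"
  using pwt_v pwt_U[of d h] dd by (simp add: wt_def)


abbreviation X :: "bit poly" where "X \<equiv> monom 1 1"

lemma pc_A: "pcompose A (monom 1 d) = B"
  by (simp add: pcompose_add pcompose_1 pcompose_monom1)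

lemma pc_B: "pcompose B (monom 1 d) = 1 + monom 1 (d * d)"
  by (simp add: pcompose_add pcompose_1 pcompose_monom1)

lemma VB: "subst_pow (v_poly n d) d * B = monom 1 (h * d * d) + monom 1 (n * d)"
proof -
  have "subst_pow (v_poly n d) d * B = pcompose (v_poly n d * A) (monom 1 d)"
    unfolding subst_pow_def pcompose_mult pc_A ..
  also have "\<dots> = monom 1 (h * d * d) + monom 1 (n * d)"
    unfolding vA by (simp add: pcompose_add pcompose_monom1)
  finally show ?thesis .
qed

lemma UB: "subst_pow (U d h) d * (1 + monom 1 (d * d)) = 1 + monom 1 (h * d * d)"
proof -
  have "subst_pow (U d h) d * (1 + monom 1 (d * d)) = pcompose (U d h * B) (monom 1 d)"
    unfolding subst_pow_def pcompose_mult pc_B ..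
  also have "\<dots> = 1 + monom 1 (h * d * d)"
    unfolding U_tele by (simp add: pcompose_add pcompose_1 pcompose_monom1)
  finally show ?thesis .
qed

lemma eqA: "eqm n A (X * (1 + monom 1 (d * d)))"
proof -
  have "X * (1 + monom 1 (d * d)) = X + monom 1 (n * 2)"
    using dd_n by (simp add: distrib_left mult_monom mult.commute)
  moreover have "eqm n (X + monom 1 (n * 2)) (X + 1)" by (intro eqm_add eqm_refl eqm_xn_pow)
  ultimately show ?thesis by (simp add: add.commute eqm_sym)
qed

lemma w2_C1: "(rmod n (X * subst_pow (v_poly n d) d), rmod n (subst_pow (U d h) d)) \<in> C1 n A B"
proof (rule C1I[OF rmod_in_Rn rmod_in_Rn])
  define V' where "V' = subst_pow (v_poly n d) d"
  define U' where "U' = subst_pow (U d h) d"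
  define m where "m = monom (1::bit) (h * d * d)"
  have s1: "eqm n (X * V' * B) (X * m + X)"
  proof -
    have "X * V' * B = X * (m + monom 1 (n * d))" unfolding V'_def m_def by (simp only: mult.assoc VB)
    moreover have "eqm n (X * (m + monom 1 (n * d))) (X * (m + 1))" by (intro eqm_mult eqm_add eqm_refl eqm_xn_pow)
    ultimately show ?thesis by (simp add: distrib_left)
  qed
  have s2: "eqm n (U' * A) (X * m + X)"
  proof -
    have "eqm n (U' * A) (U' * (X * (1 + monom 1 (d * d))))" by (intro eqm_mult eqm_refl eqA)
    moreover have "U' * (X * (1 + monom 1 (d * d))) = X * m + X"
      unfolding U'_def m_def by (simp only: mult.left_commute[of "subst_pow (U d h) d"] UB) (simp add: algebra_simps)
    ultimately show ?thesis by simp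
  qed
  have "eqm n (rmod n (X * V') * B + rmod n U' * A) (X * V' * B + U' * A)"
    by (intro eqm_add eqm_mult eqm_rmod_left eqm_refl)
  also have "eqm n (X * V' * B + U' * A) ((X * m + X) + (X * m + X))" by (intro eqm_add s1 s2)
  finally show "eqm n (rmod n (X * V') * B + rmod n U' * A) 0" by simp
qed

lemma par_w2: "par (rmod n (X * subst_pow (v_poly n d) d), rmod n (subst_pow (U d h) d)) = (of_nat (h + 1), of_nat h)"
  by (simp add: par_def poly_rmod_1 subst_pow_def poly_pcompose poly_monom v_eq poly_U_1 poly_G_1)

lemma wt_w2: "wt (rmod n (X * subst_pow (v_poly n d) d), rmod n (subst_pow (U d h) d)) \<le> d"
proof -
  have "pwt (rmod n (X * subst_pow (v_poly n d) d)) \<le> pwt X * pwt (subst_pow (v_poly n d) d)"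
    by (rule pwt_rmod_mult_le[OF n_pos])
  also have "\<dots> \<le> h + 1" using pwt_pcompose_le[of "v_poly n d" d] pwt_v by (simp add: subst_pow_def)
  finally have 1: "pwt (rmod n (X * subst_pow (v_poly n d) d)) \<le> h + 1" .
  have "pwt (rmod n (subst_pow (U d h) d)) \<le> pwt (subst_pow (U d h) d)" by (rule pwt_rmod_le[OF n_pos])
  also have "\<dots> \<le> h" using pwt_pcompose_le[of "U d h" d] pwt_U[of d h] by (simp add: subst_pow_def)
  finally show ?thesis using 1 dd by (simp add: wt_def)
qed


lemma pwt_one: "pwt (1::bit poly) = 1"
proof -
  have e: "(1::bit poly) = monom 1 0" by (simp add: monom_0 one_pCons)
  show ?thesis by (subst e) (rule pwt_monom1)
qed

lemma z1_C1: "(1, rmod n (P_poly d)) \<in> C1 n A B"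
proof (rule C1I[OF Rn_one rmod_in_Rn])
  have "eqm n (1 * B + rmod n (P_poly d) * A) (1 * B + P_poly d * A)"
    by (intro eqm_add eqm_mult eqm_rmod_left eqm_refl)
  moreover have "P_poly d * A = B" unfolding P_eq by (rule K1)
  ultimately show "eqm n (1 * B + rmod n (P_poly d) * A) 0" by simp
qed

lemma par_z1: "par (1, rmod n (P_poly d)) = (1, 1)"
  by (simp add: par_def poly_rmod_1 P_eq poly_P1)

lemma wt_z1: "wt (1, rmod n (P_poly d)) \<le> d + 1"
  using pwt_rmod_le[OF n_pos, of "P_poly d"] pwt_G[of d] by (simp add: wt_def pwt_one P_eq)

definition Qp :: "bit poly" where "Qp = X * U d (h + 1) + monom 1 (h + 1) * U d h"

lemma bpoly_solve: "(x::bit poly) = a + b \<Longrightarrow> b = x + a"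
  by (simp add: add.assoc[symmetric])

lemma UP: "U d m * G d = G (m * d)" using PU[of d m] by (simp add: mult.commute)

lemma Q_inv: "eqm n (Qp * G d) 1"
proof -
  have a1: "Qp * G d = X * G ((h + 1) * d) + monom 1 (h + 1) * G (h * d)"
    unfolding Qp_def distrib_right mult.assoc UP ..
  have a2: "G ((h + 1) * d) = G n + monom 1 n * G h" unfolding h1d_n by (rule G_add)
  have "G n = G (h + 1) + monom 1 (h + 1) * G (h * d)"
    using G_add[of "h + 1" "h * d"] hd_n by (simp add: add.commute)
  then have a3: "monom 1 (h + 1) * G (h * d) = G n + G (h + 1)" by (rule bpoly_solve)
  have a4: "G (h + 1) = 1 + X * G h" using G_add[of 1 h] by (simp add: add.commute)
  have "G (n + 1) = G n + monom 1 n" using G_add[of n 1] by simp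
  moreover have "G (n + 1) = 1 + X * G n" using G_add[of 1 n] by (simp add: add.commute)
  ultimately have "G n + monom 1 n = 1 + X * G n" by simp
  then have a5: "X * G n = (G n + monom 1 n) + 1" by (rule bpoly_solve)
  have "Qp * G d = ((G n + monom 1 n) + 1) + monom 1 n * (X * G h) + (G n + (1 + X * G h))"
    unfolding a1 a2 a3 a4 distrib_left a5[symmetric] by (simp only: mult.left_commute)
  also have "eqm n (((G n + monom 1 n) + 1) + monom 1 n * (X * G h) + (G n + (1 + X * G h)))
                   (((G n + 1) + 1) + 1 * (X * G h) + (G n + (1 + X * G h)))"
    by (intro eqm_add eqm_mult eqm_refl eqm_xn)
  also have "((G n + 1) + 1) + 1 * (X * G h) + (G n + (1 + X * G h)) = 1"
    by (simp add: add.assoc add.left_commute add.commute)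
  finally show ?thesis .
qed

lemma inv_exists: "\<exists>q \<in> Rn n. rmod n (q * P_poly d) = 1"
proof (intro bexI[of _ "rmod n Qp"] rmod_in_Rn)
  have "eqm n (rmod n Qp * P_poly d) (Qp * G d)" unfolding P_eq by (intro eqm_mult eqm_rmod_left eqm_refl)
  also note Q_inv
  finally show "rmod n (rmod n Qp * P_poly d) = 1" using rmod_one by (simp add: eqm_rmod)
qed

lemma pwt_Q: "pwt (rmod n Qp) \<le> d"
proof -
  have "pwt (rmod n Qp) \<le> pwt Qp" by (rule pwt_rmod_le[OF n_pos])
  also have "\<dots> \<le> pwt (X * U d (h + 1)) + pwt (monom 1 (h + 1) * U d h)" unfolding Qp_def by (rule pwt_add_le)
  also have "\<dots> \<le> (h + 1) + h"
    using pwt_mult_le[of X "U d (h + 1)"] pwt_mult_le[of "monom 1 (h + 1)" "U d h"] pwt_U[of d h] pwt_U[of d "h + 1"]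
    by simp
  finally show ?thesis using dd by simp
qed

lemma rinv_props: "rinv n (P_poly d) \<in> Rn n \<and> rmod n (rinv n (P_poly d) * P_poly d) = 1"
  unfolding rinv_def using someI_ex[OF inv_exists[unfolded Bex_def]] .

lemma rinv_eq: "rinv n (P_poly d) = rmod n Qp"
proof -
  define q0 where "q0 = rinv n (P_poly d)"
  have q0: "q0 \<in> Rn n" "eqm n (q0 * G d) 1" using rinv_props rmod_one by (auto simp: q0_def eqm_rmod P_eq)
  have "eqm n q0 (q0 * (Qp * G d))" using eqm_mult[OF eqm_refl[of n q0] Q_inv] by (simp add: eqm_sym)
  also have "q0 * (Qp * G d) = Qp * (q0 * G d)" by (simp add: mult_ac)
  also have "eqm n (Qp * (q0 * G d)) (Qp * 1)" by (intro eqm_mult eqm_refl q0(2))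
  finally have "eqm n q0 Qp" by simp
  then have "rmod n q0 = rmod n Qp" by (simp add: eqm_rmod)
  then show ?thesis using q0(1) by (simp add: Rn_def q0_def)
qed

lemma z2_C1: "(rinv n (P_poly d), 1) \<in> C1 n A B"
proof (rule C1I[OF conjunct1[OF rinv_props] Rn_one])
  define q0 where "q0 = rinv n (P_poly d)"
  have q0: "eqm n (q0 * G d) 1" using rinv_props rmod_one by (auto simp: q0_def eqm_rmod P_eq)
  have "q0 * B + 1 * A = (q0 * G d) * A + A" by (simp add: K1[of d, symmetric] mult.assoc)
  also have "eqm n ((q0 * G d) * A + A) (1 * A + A)" by (intro eqm_add eqm_mult eqm_refl q0)
  finally show "eqm n (rinv n (P_poly d) * B + 1 * A) 0" by (simp add: q0_def)
qed

lemma par_z2: "par (rinv n (P_poly d), 1) = (1, 1)"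
proof -
  have "poly (rmod n (rinv n (P_poly d) * P_poly d)) 1 = 1" using rinv_props by simp
  then have "poly (rinv n (P_poly d)) 1 = 1" by (simp add: poly_rmod_1 P_eq poly_P1)
  then show ?thesis by (simp add: par_def)
qed

lemma wt_z2: "wt (rinv n (P_poly d), 1) \<le> d + 1"
  using pwt_Q by (simp add: wt_def rinv_eq pwt_one)

end

theorem theorem5:
  fixes d n :: nat and a b u v :: "bit poly" and w1 w2 z1 z2 :: "bit poly \<times> bit poly"
  assumes "d \<ge> 3" and "odd d" and "n = (d^2 + 1) div 2"
    and "a = 1 + monom 1 1" and "b = 1 + monom 1 d"
    and "u = u_poly d" and "v = v_poly n d"
    and "w1 = (u, v)"
    and "w2 = (rmod n (monom 1 1 * subst_pow v d), rmod n (subst_pow u d))"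
    and "z1 = (1, rmod n (P_poly d))"
    and "z2 = (rinv n (P_poly d), 1)"
  shows
    "(\<exists>q \<in> Rn n. rmod n (q * P_poly d) = 1)
     \<and> w1 \<in> C1 n a b - C2 n a b
     \<and> w2 \<in> C1 n a b - C2 n a b
     \<and> vadd w1 w2 \<notin> C2 n a b
     \<and> (\<forall>i. shift n i w1 \<in> C1 n a b - C2 n a b \<and> same_logical n a b (shift n i w1) w1
             \<and> shift n i w2 \<in> C1 n a b - C2 n a b \<and> same_logical n a b (shift n i w2) w2
             \<and> same_logical n a b (shift n i z1) (vadd w1 w2)
             \<and> same_logical n a b (shift n i z2) (vadd w1 w2)
             \<and> wt (shift n i w1) = d \<and> wt (shift n i w2) = d
             \<and> wt (shift n i z1) = d + 1 \<and> wt (shift n i z2) = d + 1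
             \<and> min_weight n a b (shift n i w1) \<and> min_weight n a b (shift n i w2)
             \<and> min_weight n a b (shift n i z1) \<and> min_weight n a b (shift n i z2))"
proof -
  define h where "h = (d - 1) div 2"
  have dd: "d = 2 * h + 1" using assms(2) by (simp add: h_def)
  have h1: "h \<ge> 1" using assms(1) dd by simp
  have "d ^ 2 + 1 = 2 * (2 * h * h + 2 * h + 1)" unfolding dd by (simp add: power2_eq_square algebra_simps)
  then have nn: "n = 2 * h * h + 2 * h + 1" using assms(3) by simp
  interpret g: gb h d n using h1 dd nn by unfold_locales
  have ab: "a = g.A" "b = g.B" using assms(4,5) by simp_all
  have uu: "u = U d h" using assms(6) g.u_eq by simp
  have W1: "w1 \<in> C1 n a b" "g.par w1 = (of_nat h, of_nat (h + 1))" "wt w1 \<le> d"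
    unfolding assms(8) uu assms(7) ab using g.w1_C1 g.par_w1 g.wt_w1 by simp_all
  have W2: "w2 \<in> C1 n a b" "g.par w2 = (of_nat (h + 1), of_nat h)" "wt w2 \<le> d"
    unfolding assms(9) uu assms(7) ab using g.w2_C1 g.par_w2 g.wt_w2 by simp_all
  have Z1: "z1 \<in> C1 n a b" "g.par z1 = (1, 1)" "wt z1 \<le> d + 1"
    unfolding assms(10) ab using g.z1_C1 g.par_z1 g.wt_z1 by simp_all
  have Z2: "z2 \<in> C1 n a b" "g.par z2 = (1, 1)" "wt z2 \<le> d + 1"
    unfolding assms(11) ab using g.z2_C1 g.par_z2 g.wt_z2 by simp_all
  have nz1: "g.par w1 \<noteq> (0, 0)" and nz2: "g.par w2 \<noteq> (0, 0)"
    unfolding W1(2) W2(2) by (simp_all add: of_nat_bit)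
  have V: "vadd w1 w2 \<in> C1 n a b" "g.par (vadd w1 w2) = (1, 1)"
    using g.vadd_C1[of w1 w2] W1 W2 ab
    by (simp_all add: g.par_def vadd_def of_nat_bit)
  have notC2: "\<And>w. w \<in> C1 n a b \<Longrightarrow> g.par w \<noteq> (0, 0) \<Longrightarrow> w \<in> C1 n a b - C2 n a b"
    using g.C2_par ab by blast
  have SL: "\<And>w w'. w \<in> C1 n a b \<Longrightarrow> w' \<in> C1 n a b \<Longrightarrow> g.par w = g.par w' \<Longrightarrow> same_logical n a b w w'"
    using g.same_logical_iff ab by blast
  have sh: "\<And>w i. w \<in> C1 n a b \<Longrightarrow> shift n i w \<in> C1 n a b \<and> g.par (shift n i w) = g.par w \<and> wt (shift n i w) \<le> wt w"
    using g.shift_C1 g.par_shift g.wt_shift_le ab by blast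
  have minw: "\<And>w. w \<in> C1 n a b \<Longrightarrow> g.par w \<noteq> (0, 0) \<Longrightarrow> wt w \<le> d \<Longrightarrow> min_weight n a b w \<and> wt w = d"
    using g.minw ab by blast
  have minw1: "\<And>w. w \<in> C1 n a b \<Longrightarrow> g.par w = (1, 1) \<Longrightarrow> wt w \<le> d + 1 \<Longrightarrow> min_weight n a b w \<and> wt w = d + 1"
    using g.minw1 ab by blast
  have inv: "\<exists>q \<in> Rn n. rmod n (q * P_poly d) = 1" by (rule g.inv_exists)
  have part2: "\<forall>i. shift n i w1 \<in> C1 n a b - C2 n a b \<and> same_logical n a b (shift n i w1) w1
             \<and> shift n i w2 \<in> C1 n a b - C2 n a b \<and> same_logical n a b (shift n i w2) w2
             \<and> same_logical n a b (shift n i z1) (vadd w1 w2)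
             \<and> same_logical n a b (shift n i z2) (vadd w1 w2)
             \<and> wt (shift n i w1) = d \<and> wt (shift n i w2) = d
             \<and> wt (shift n i z1) = d + 1 \<and> wt (shift n i z2) = d + 1
             \<and> min_weight n a b (shift n i w1) \<and> min_weight n a b (shift n i w2)
             \<and> min_weight n a b (shift n i z1) \<and> min_weight n a b (shift n i z2)"
  proof
    fix i
    have s1: "shift n i w1 \<in> C1 n a b" "g.par (shift n i w1) = g.par w1" "wt (shift n i w1) \<le> d"
      using sh[OF W1(1), of i] W1(3) by auto
    have s2: "shift n i w2 \<in> C1 n a b" "g.par (shift n i w2) = g.par w2" "wt (shift n i w2) \<le> d"
      using sh[OF W2(1), of i] W2(3) by auto
    have s3: "shift n i z1 \<in> C1 n a b" "g.par (shift n i z1) = (1, 1)" "wt (shift n i z1) \<le> d + 1"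
      using sh[OF Z1(1), of i] Z1(2,3) by auto
    have s4: "shift n i z2 \<in> C1 n a b" "g.par (shift n i z2) = (1, 1)" "wt (shift n i z2) \<le> d + 1"
      using sh[OF Z2(1), of i] Z2(2,3) by auto
    show "shift n i w1 \<in> C1 n a b - C2 n a b \<and> same_logical n a b (shift n i w1) w1
             \<and> shift n i w2 \<in> C1 n a b - C2 n a b \<and> same_logical n a b (shift n i w2) w2
             \<and> same_logical n a b (shift n i z1) (vadd w1 w2)
             \<and> same_logical n a b (shift n i z2) (vadd w1 w2)
             \<and> wt (shift n i w1) = d \<and> wt (shift n i w2) = d
             \<and> wt (shift n i z1) = d + 1 \<and> wt (shift n i z2) = d + 1
             \<and> min_weight n a b (shift n i w1) \<and> min_weight n a b (shift n i w2)
             \<and> min_weight n a b (shift n i z1) \<and> min_weight n a b (shift n i z2)"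
      using notC2[OF s1(1)] notC2[OF s2(1)] SL[OF s1(1) W1(1) s1(2)] SL[OF s2(1) W2(1) s2(2)]
        SL[OF s3(1) V(1)] SL[OF s4(1) V(1)] s3(2) s4(2) V(2)
        minw[OF s1(1) _ s1(3)] minw[OF s2(1) _ s2(3)] minw1[OF s3] minw1[OF s4] s1(2) s2(2) nz1 nz2
      by simp
  qed
  show ?thesis
    using inv notC2[OF W1(1) nz1] notC2[OF W2(1) nz2] V part2 g.C2_par ab by auto
qed

end
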